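(* Let $\mathbf{u}$ be quasi-definite with SMOP $(P_n)$, $c\in\mathbb{C}$ with $P_n(c)\ne0$ for all $n$, and $\widetilde{\mathbf{u}}=(x-c)\mathbf{u}$ with associated polynomials of the first kind $(\widetilde P^{(1)}_n)$. Let $\mathbf{u}^\alpha$ be a quasi-definite functional whose SMOP is $R_n(x)=\frac{\mathbf{u}_0}{\widetilde{\mathbf{u}}_0}\big[(x-c)P^{(1)}_n(x)-P_{n+1}(x)\big]$, $n\ge0$. Then $(\widetilde P^{(1)}_n)_{n\ge0}$ is the SMOP of $(x-c)\mathbf{u}^\alpha$; i.e., up to a nonzero constant factor, $\widetilde{\mathbf{u}}^{(1)}=(x-c)\mathbf{u}^\alpha$ is a canonical Christoffel transformation of $\mathbf{u}^\alpha$.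
   Context: Linear functionals on complex polynomials, moments $\mathbf{u}_n$, $\langle(x-c)\mathbf{u},p\rangle=\langle\mathbf{u},(x-c)p\rangle$. Quasi-definite: all leading principal Hankel minors nonzero; SMOP = sequence of monic orthogonal polynomials, satisfying $xP_n=P_{n+1}+b_nP_n+a_nP_{n-1}$, $P_{-1}=0$, $P_0=1$, $a_n\neq0$. Associated polynomials of the first kind: monic, $xP^{(1)}_n=P^{(1)}_{n+1}+b_{n+1}P^{(1)}_n+a_{n+1}P^{(1)}_{n-1}$, $P^{(1)}_{-1}=0,P^{(1)}_0=1$; $\widetilde{\mathbf{u}}^{(1)}$ is a functional with SMOP $(\widetilde P^{(1)}_n)$. (The polynomials $R_n$ are monic of degree $n$ and satisfy a three-term recurrence with nonzero coefficients, so such $\mathbf{u}^\alpha$ exists.) *)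

theory Defs
  imports Complex_Main "HOL-Computational_Algebra.Polynomial" "Jordan_Normal_Form.Determinant"
begin

(* A linear functional u on complex polynomials is represented by its moment
   sequence: u n = <u, x^n>. *)
type_synonym functional = "nat \<Rightarrow> complex"

definition fapp :: "functional \<Rightarrow> complex poly \<Rightarrow> complex" where
  "fapp u p = (\<Sum>i\<le>degree p. coeff p i * u i)"

(* (x - c) u : <(x-c)u, p> = <u, (x-c)p>; on moments: u (n+1) - c u n *)
definition mult_xc :: "complex \<Rightarrow> functional \<Rightarrow> functional" where
  "mult_xc c u = (\<lambda>n. u (Suc n) - c * u n)"

definition hankel :: "functional \<Rightarrow> nat \<Rightarrow> complex mat" where
  "hankel u n = mat (Suc n) (Suc n) (\<lambda>(i, j). u (i + j))"

definition quasi_definite :: "functional \<Rightarrow> bool" where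
  "quasi_definite u \<longleftrightarrow> (\<forall>n. det (hankel u n) \<noteq> 0)"

definition is_SMOP :: "functional \<Rightarrow> (nat \<Rightarrow> complex poly) \<Rightarrow> bool" where
  "is_SMOP u P \<longleftrightarrow>
     (\<forall>n. degree (P n) = n \<and> lead_coeff (P n) = 1) \<and>
     (\<forall>n m. n \<noteq> m \<longrightarrow> fapp u (P n * P m) = 0) \<and>
     (\<forall>n. fapp u (P n * P n) \<noteq> 0)"

(* Polynomials generated by x p_n = p_{n+1} + b_n p_n + a_n p_{n-1}, p_{-1} = 0, p_0 = 1 *)
fun ttr :: "(nat \<Rightarrow> complex) \<Rightarrow> (nat \<Rightarrow> complex) \<Rightarrow> nat \<Rightarrow> complex poly" where
  "ttr b a 0 = 1"
| "ttr b a (Suc 0) = [:- b 0, 1:]"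
| "ttr b a (Suc (Suc n)) = [:- b (Suc n), 1:] * ttr b a (Suc n) - smult (a (Suc n)) (ttr b a n)"

(* Associated polynomials of the first kind: shifted coefficients b_{n+1}, a_{n+1} *)
definition assoc1 :: "(nat \<Rightarrow> complex) \<Rightarrow> (nat \<Rightarrow> complex) \<Rightarrow> nat \<Rightarrow> complex poly" where
  "assoc1 b a = ttr (\<lambda>n. b (Suc n)) (\<lambda>n. a (Suc n))"

end

theory Submission
  imports Defs
begin


lemma fapp_bound: "degree p \<le> N \<Longrightarrow> fapp u p = (\<Sum>i\<le>N. coeff p i * u i)"
  unfolding fapp_def
  by (rule sum.mono_neutral_left) (auto simp: coeff_eq_0)

lemma fapp_add: "fapp u (p + q) = fapp u p + fapp u q"
proof -
  let ?N = "max (degree p) (degree q)"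
  have "degree (p+q) \<le> ?N" by (simp add: degree_add_le)
  then show ?thesis
    by (simp add: fapp_bound[of _ ?N] sum.distrib distrib_right)
qed

lemma fapp_smult: "fapp u (smult k p) = k * fapp u p"
  unfolding fapp_def by (simp add: sum_distrib_left mult.assoc)

lemma fapp_minus: "fapp u (- p) = - fapp u p"
  using fapp_smult[of u "-1" p] by simp

lemma fapp_diff: "fapp u (p - q) = fapp u p - fapp u q"
  using fapp_add[of u p "-q"] fapp_minus[of u q] by simp

lemma fapp_zero[simp]: "fapp u 0 = 0" by (simp add: fapp_def)

lemma fapp_one: "fapp u 1 = u 0" by (simp add: fapp_def)

lemma fapp_pCons0: "fapp u (pCons 0 p) = fapp (\<lambda>n. u (Suc n)) p"
proof -
  have "degree (pCons 0 p) \<le> Suc (degree p)" by (simp add: degree_pCons_le)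
  then have "fapp u (pCons 0 p) = (\<Sum>i\<le>Suc (degree p). coeff (pCons 0 p) i * u i)"
    by (rule fapp_bound)
  also have "\<dots> = (\<Sum>i\<le>degree p. coeff p i * u (Suc i))"
    by (subst sum.atMost_Suc_shift) simp
  finally show ?thesis by (simp add: fapp_def)
qed

lemma fapp_mult_xc: "fapp (mult_xc c u) p = fapp u ([:-c,1:] * p)"
proof -
  have "[:-c,1:] * p = smult (-c) p + pCons 0 p" by simp
  then have "fapp u ([:-c,1:] * p) = - c * fapp u p + fapp (\<lambda>n. u (Suc n)) p"
    by (simp only: fapp_add fapp_smult fapp_pCons0)
  also have "\<dots> = fapp (mult_xc c u) p"
    unfolding fapp_def mult_xc_def by (simp add: sum_distrib_left sum.distrib[symmetric] algebra_simps)
  finally show ?thesis by simp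
qed

lemma ttr_deg: "degree (ttr b a n) = n \<and> coeff (ttr b a n) n = 1"
proof (induction b a n rule: ttr.induct)
  case (1 b a) then show ?case by simp
next
  case (2 b a) then show ?case by simp
next
  case (3 b a n)
  let ?p = "ttr b a (Suc n)" and ?q = "ttr b a n"
  have e: "[:- b (Suc n), 1:] * ?p = smult (- b (Suc n)) ?p + pCons 0 ?p" by simp
  have d1: "degree ([:- b (Suc n), 1:] * ?p) = Suc (Suc n)"
    using 3 by (subst degree_mult_eq) auto
  have c1: "coeff ([:- b (Suc n), 1:] * ?p) (Suc (Suc n)) = 1"
    using 3 by (simp only: e) (simp add: coeff_eq_0)
  have dq: "degree (smult (a (Suc n)) ?q) < Suc (Suc n)"
    using 3 by (simp add: degree_smult_le le_less_trans[OF degree_smult_le])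
  have "degree ([:- b (Suc n), 1:] * ?p - smult (a (Suc n)) ?q) = Suc (Suc n)"
    using d1 dq by (simp only: diff_conv_add_uminus, subst degree_add_eq_left) auto
  moreover have "coeff ([:- b (Suc n), 1:] * ?p - smult (a (Suc n)) ?q) (Suc (Suc n)) = 1"
    using c1 3 by (simp add: coeff_eq_0)
  ultimately show ?case by simp
qed

lemma deg_lt: "degree q \<le> m \<Longrightarrow> coeff q m = 0 \<Longrightarrow> q = 0 \<or> degree q < m"
  by (metis le_neq_implies_less leading_coeff_0_iff)


lemma span_orth:
  assumes B: "\<forall>k. degree (B k) = k \<and> coeff (B k) k = 1"
    and Z: "\<forall>k<n. fapp w (B k * T) = 0"
  shows "degree p < n \<Longrightarrow> fapp w (p * T) = 0"
proof (induction "degree p" arbitrary: p rule: less_induct)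
  case less
  let ?m = "degree p"
  define q where "q = p - smult (coeff p ?m) (B ?m)"
  have dq: "degree q \<le> ?m" using B unfolding q_def
    by (intro degree_diff_le) (auto intro: order_trans[OF degree_smult_le])
  have cq: "coeff q ?m = 0" using B by (simp add: q_def)
  have p: "p = smult (coeff p ?m) (B ?m) + q" by (simp add: q_def)
  have "fapp w (p*T) = coeff p ?m * fapp w (B ?m * T) + fapp w (q*T)"
    by (subst p) (simp add: distrib_right fapp_add fapp_smult)
  also have "fapp w (B ?m * T) = 0" using Z less.prems by simp
  also have "fapp w (q*T) = 0"
  proof -
    from deg_lt[OF dq cq] show ?thesis
    proof
      assume "q = 0" then show ?thesis by simp
    next
      assume h: "degree q < ?m"
      then show ?thesis using less.hyps[OF h] less.prems by simp
    qed
  qed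
  finally show ?case by simp
qed

lemma smop_orth:
  assumes "is_SMOP w S" "degree p < n"
  shows "fapp w (p * S n) = 0"
proof (rule span_orth[where B=S and n=n])
  show "\<forall>k. degree (S k) = k \<and> coeff (S k) k = 1" using assms(1) unfolding is_SMOP_def by metis
  show "\<forall>k<n. fapp w (S k * S n) = 0" using assms(1) unfolding is_SMOP_def by auto
qed (fact assms(2))

lemma ttr_rec0: "[:0,1:] * ttr b a 0 = ttr b a 1 + smult (b 0) (ttr b a 0)"
  by simp

lemma ttr_recS: "[:0,1:] * ttr b a (Suc n) = ttr b a (Suc (Suc n)) + smult (b (Suc n)) (ttr b a (Suc n)) + smult (a (Suc n)) (ttr b a n)"
proof -
  have "[:- b (Suc n), 1:] * ttr b a (Suc n) = [:0,1:] * ttr b a (Suc n) - smult (b (Suc n)) (ttr b a (Suc n))"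
    by simp
  then show ?thesis by simp
qed

lemma favard:
  assumes an: "\<forall>n. \<alpha> n \<noteq> 0" and z: "\<forall>n\<ge>1. fapp w (ttr \<beta> \<alpha> n) = 0" and w0: "w 0 \<noteq> 0"
  shows "is_SMOP w (ttr \<beta> \<alpha>)"
proof -
  define Q where "Q = ttr \<beta> \<alpha>"
  define X :: "complex poly" where "X = [:0,1:]"
  define M where "M k n = fapp w (X^k * Q n)" for k n
  have recS: "M (Suc k) (Suc n) = M k (Suc (Suc n)) + \<beta> (Suc n) * M k (Suc n) + \<alpha> (Suc n) * M k n" for k n
  proof -
    have "X^(Suc k) * Q (Suc n) = X^k * (X * Q (Suc n))" by (simp add: algebra_simps)
    also have "X * Q (Suc n) = Q (Suc (Suc n)) + smult (\<beta> (Suc n)) (Q (Suc n)) + smult (\<alpha> (Suc n)) (Q n)"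
      unfolding X_def Q_def by (rule ttr_recS)
    finally show ?thesis unfolding M_def by (simp add: distrib_left fapp_add fapp_smult mult_smult_right)
  qed
  have c1: "\<forall>n. k < n \<longrightarrow> M k n = 0" for k
  proof (induction k)
    case 0 then show ?case using z by (simp add: M_def Q_def)
  next
    case (Suc k)
    show ?case
    proof (intro allI impI)
      fix n assume "Suc k < n"
      then obtain n' where n: "n = Suc n'" and "k < n'" by (cases n) auto
      then show "M (Suc k) n = 0" using Suc.IH by (simp add: recS)
    qed
  qed
  have c2: "M n n \<noteq> 0" for n
  proof (induction n)
    case 0 then show ?case using w0 by (simp add: M_def Q_def fapp_one)
  next
    case (Suc n) then show ?case using c1 an by (simp add: recS)
  qed
  have orth: "degree p < n \<Longrightarrow> fapp w (p * Q n) = 0" for p n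
  proof (rule span_orth[where B="\<lambda>k. X^k" and n=n])
    show "\<forall>k. degree (X ^ k) = k \<and> coeff (X ^ k) k = 1"
      unfolding X_def using degree_linear_power[of 0] coeff_linear_power[of 0] by auto
    show "\<forall>k<n. fapp w (X ^ k * Q n) = 0" using c1 by (simp add: M_def)
  qed
  have dQ: "degree (Q n) = n \<and> coeff (Q n) n = 1" for n unfolding Q_def by (rule ttr_deg)
  have o2: "fapp w (Q m * Q n) = 0" if "m \<noteq> n" for m n
  proof (cases "m < n")
    case True then show ?thesis using orth dQ by simp
  next
    case False then have "n < m" using that by simp
    then show ?thesis using orth[of "Q n" m] dQ by (simp add: mult.commute)
  qed
  have nrm: "fapp w (Q n * Q n) \<noteq> 0" for n
  proof -
    define q where "q = Q n - X^n"
    have dq: "degree q \<le> n" unfolding q_def X_def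
      using dQ degree_linear_power[of "0::complex" n] by (intro degree_diff_le) auto
    have cq: "coeff q n = 0" unfolding q_def X_def using dQ coeff_linear_power[of "0::complex" n] by simp
    have "fapp w (Q n * Q n) = M n n + fapp w (q * Q n)"
      unfolding M_def q_def by (simp add: algebra_simps fapp_diff)
    also have "fapp w (q * Q n) = 0"
      using deg_lt[OF dq cq] orth by auto
    finally show ?thesis using c2 by simp
  qed
  show ?thesis unfolding is_SMOP_def using dQ o2 nrm by (simp add: Q_def)
qed


lemma ring_id:
  fixes X Y0 Y1 Y2 Y3 aA aB b1 b2 r0 r1 r2 c :: "'a::comm_ring_1"
  assumes "Y3 = (X - b2)*Y2 - aB*Y1" "Y2 = (X - b1)*Y1 - aA*Y0"
    "aB = (c-b2)*r1 - r2*r1" "aA = (c-b1)*r0 - r1*r0"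
  shows "Y3 - r2 * Y2 = (X - (b2 + r2 - r1)) * (Y2 - r1 * Y1) - (r1*(c-b1-r1)) * (Y1 - r0 * Y0)"
  unfolding assms(1,3) unfolding assms(2) unfolding assms(4) by (simp add: algebra_simps)

lemma christ_alg:
  fixes Y0 Y1 Y2 Y3 :: "complex poly"
  assumes "Y3 = [:-b2,1:]*Y2 - smult a2 Y1" "Y2 = [:-b1,1:]*Y1 - smult a1 Y0"
    "a2 = (c-b2)*r1 - r2*r1" "a1 = (c-b1)*r0 - r1*r0"
  shows "Y3 - smult r2 Y2 = [:-(b2+r2-r1),1:]*(Y2 - smult r1 Y1) - smult (r1*(c-b1-r1)) (Y1 - smult r0 Y0)"
proof -
  have "Y3 - [:r2:] * Y2 = ([:0,1:] - ([:b2:] + [:r2:] - [:r1:])) * (Y2 - [:r1:]*Y1) - ([:r1:]*([:c:] - [:b1:] - [:r1:]))*(Y1 - [:r0:] * Y0)"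
    by (rule ring_id[where aA="[:a1:]" and aB = "[:a2:]"]) (use assms in simp_all)
  then show ?thesis by (simp add: mult.commute)
qed


lemma lin_id1:
  fixes x B A p1 q1 p2 q2 :: "'a::comm_ring_1"
  shows "x*(B*p1 - A*q1) - (B*p2 - A*q2) = B*(x*p1 - p2) - A*(x*q1 - q2)"
  by (simp add: algebra_simps)

lemma lin_id2:
  fixes k x B A p q :: "'a::comm_ring_1"
  shows "k*(x*(B*p - A*q)) = B*(k*(x*p)) - A*(k*(x*q))"
  by (simp add: algebra_simps)

lemma lin_id3:
  fixes x B A p q :: "'a::comm_ring_1"
  shows "x*(B*p - A*q) = B*(x*p) - A*(x*q)"
  by (simp add: algebra_simps)

theorem mainTheorem11:
  fixes u v :: functional and P Pt R :: "nat \<Rightarrow> complex poly"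
    and b a bb aa :: "nat \<Rightarrow> complex" and c :: complex
  assumes "quasi_definite u"
    and "is_SMOP u P"
    and "\<forall>n. P n = ttr b a n" and "\<forall>n. a n \<noteq> 0"
    and "\<forall>n. poly (P n) c \<noteq> 0"
    and "is_SMOP (mult_xc c u) Pt"
    and "\<forall>n. Pt n = ttr bb aa n" and "\<forall>n. aa n \<noteq> 0"
    and "\<forall>n. R n = smult (u 0 / mult_xc c u 0)
                       ([:- c, 1:] * assoc1 b a n - P (Suc n))"
    and "quasi_definite v"
    and "is_SMOP v R"
  shows "is_SMOP (mult_xc c v) (assoc1 bb aa)"
proof -
  note SP = assms(2) and Pdef = assms(3) and Pc = assms(5) and SPt = assms(6)
    and Ptdef = assms(7) and aanz = assms(8) and Rdef = assms(9) and SR = assms(11)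
  define ut where "ut = mult_xc c u"
  define \<kappa> where "\<kappa> = u 0 / mult_xc c u 0"
  define Xc :: "complex poly" where "Xc = [:-c,1:]"
  define r where "r n = poly (P (Suc n)) c / poly (P n) c" for n
  have Prec: "P (Suc (Suc k)) = [:- b (Suc k), 1:] * P (Suc k) - smult (a (Suc k)) (P k)" for k
    using Pdef by simp
  have P0: "P 0 = 1" and P1: "P 1 = [:-b 0, 1:]" using Pdef by simp_all
  have rnz: "r n \<noteq> 0" for n using Pc by (simp add: r_def)
  have r0: "r 0 = c - b 0" using P0 P1 by (simp add: r_def)
  have r_rec: "r (Suc k) * r k = (c - b (Suc k)) * r k - a (Suc k)" for k
  proof -
    have "poly (P (Suc (Suc k))) c = (c - b (Suc k)) * poly (P (Suc k)) c - a (Suc k) * poly (P k) c"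
      by (subst Prec) (simp add: algebra_simps)
    then show ?thesis using Pc unfolding r_def by (simp add: field_simps)
  qed
  have dP: "degree (P n) = n \<and> coeff (P n) n = 1" for n using Pdef ttr_deg by metis
  define E where "E n = P (Suc n) - smult (r n) (P n)" for n
  have Ec: "poly (E n) c = 0" for n using Pc by (simp add: E_def r_def)
  have dE: "degree (E n) = Suc n \<and> coeff (E n) (Suc n) = 1" for n
  proof -
    have "degree (smult (r n) (P n)) < Suc n" using dP[of n]
      by (simp add: le_less_trans[OF degree_smult_le])
    then show ?thesis using dP[of "Suc n"] dP[of n] unfolding E_def
      by (simp only: diff_conv_add_uminus, subst degree_add_eq_left) (auto simp: coeff_eq_0)
  qed
  define K where "K n = E n div Xc" for n
  have XK: "Xc * K n = E n" for n
    using Ec[of n] unfolding K_def Xc_def poly_eq_0_iff_dvd by (rule dvd_mult_div_cancel)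
  have dK: "degree (K n) = n \<and> coeff (K n) n = 1" for n
  proof -
    have Enz: "E n \<noteq> 0" using dE[of n] by auto
    then have "K n \<noteq> 0" using XK[of n] by auto
    then have "degree (Xc * K n) = 1 + degree (K n)"
      by (subst degree_mult_eq) (auto simp: Xc_def)
    then have "degree (E n) = 1 + degree (K n)" using XK[of n] by simp
    moreover have "lead_coeff (Xc * K n) = lead_coeff (K n)"
      unfolding lead_coeff_mult by (simp add: Xc_def)
    then have "lead_coeff (E n) = lead_coeff (K n)" using XK[of n] by simp
    ultimately show ?thesis using dE[of n] by simp
  qed
  have Korth: "fapp ut (K n * p) = 0" if "degree p < n" for n p
  proof -
    have "fapp ut (K n * p) = fapp u (E n * p)"
      unfolding ut_def fapp_mult_xc Xc_def[symmetric] mult.assoc[symmetric] XK ..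
    also have "\<dots> = fapp u (p * P (Suc n)) - r n * fapp u (p * P n)"
      by (simp add: E_def algebra_simps fapp_diff fapp_smult)
    also have "\<dots> = 0" using smop_orth[OF SP] that by simp
    finally show ?thesis .
  qed
  have PtK: "Pt n = K n" for n
  proof (rule ccontr)
    assume ne: "Pt n \<noteq> K n"
    define d where "d = K n - Pt n"
    have dPt: "degree (Pt n) = n \<and> coeff (Pt n) n = 1" for n using Ptdef ttr_deg by metis
    have "degree d \<le> n" unfolding d_def using dK dPt by (intro degree_diff_le) auto
    moreover have "coeff d n = 0" unfolding d_def using dK dPt by simp
    moreover have dnz: "d \<noteq> 0" using ne by (simp add: d_def)
    ultimately have mlt: "degree d < n" using deg_lt by blast
    define m where "m = degree d"
    have "fapp ut (d * Pt m) = fapp ut (K n * Pt m) - fapp ut (Pt m * Pt n)"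
      by (simp add: d_def algebra_simps fapp_diff)
    also have "\<dots> = 0" using Korth[of "Pt m" n] smop_orth[OF SPt[folded ut_def], of "Pt m" n] dPt[of m] mlt
      by (simp add: m_def)
    finally have z: "fapp ut (d * Pt m) = 0" .
    define q where "q = d - smult (lead_coeff d) (Pt m)"
    have dq: "degree q \<le> m" unfolding q_def m_def using dPt
      by (intro degree_diff_le) (auto intro: order_trans[OF degree_smult_le])
    have cq: "coeff q m = 0" unfolding q_def m_def using dPt by simp
    have qz: "fapp ut (q * Pt m) = 0"
      using deg_lt[OF dq cq] smop_orth[OF SPt[folded ut_def], of q m] by auto
    have "fapp ut (d * Pt m) = lead_coeff d * fapp ut (Pt m * Pt m) + fapp ut (q * Pt m)"
      by (simp add: q_def algebra_simps fapp_diff fapp_smult)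
    then have "lead_coeff d * fapp ut (Pt m * Pt m) = 0" using z qz by simp
    moreover have "fapp ut (Pt m * Pt m) \<noteq> 0" using SPt unfolding ut_def is_SMOP_def by blast
    ultimately show False using dnz by simp
  qed
  have XPt: "Xc * Pt n = E n" for n using PtK XK by simp
  define \<beta> where "\<beta> n = b (Suc n) + r (Suc n) - r n" for n
  define \<alpha> where "\<alpha> n = r n * (c - b n - r n)" for n
  have Erec: "E (Suc (Suc n)) = [:-\<beta> (Suc n),1:] * E (Suc n) - smult (\<alpha> (Suc n)) (E n)" for n
    unfolding E_def \<beta>_def \<alpha>_def
  proof (rule christ_alg)
    show "P (Suc (Suc (Suc n))) = [:- b (Suc (Suc n)), 1:] * P (Suc (Suc n)) - smult (a (Suc (Suc n))) (P (Suc n))"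
      by (rule Prec)
    show "P (Suc (Suc n)) = [:- b (Suc n), 1:] * P (Suc n) - smult (a (Suc n)) (P n)"
      by (rule Prec)
    show "a (Suc (Suc n)) = (c - b (Suc (Suc n))) * r (Suc n) - r (Suc (Suc n)) * r (Suc n)"
      using r_rec[of "Suc n"] by simp
    show "a (Suc n) = (c - b (Suc n)) * r n - r (Suc n) * r n"
      using r_rec[of n] by simp
  qed
  have Erec2: "E (Suc (Suc n)) = [:-bb (Suc n),1:] * E (Suc n) - smult (aa (Suc n)) (E n)" for n
  proof -
    have "Pt (Suc (Suc n)) = [:-bb (Suc n),1:] * Pt (Suc n) - smult (aa (Suc n)) (Pt n)"
      using Ptdef by simp
    then have "Xc * Pt (Suc (Suc n)) = Xc * ([:-bb (Suc n),1:] * Pt (Suc n) - [:aa (Suc n):] * Pt n)"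
      by simp
    also have "\<dots> = [:-bb (Suc n),1:] * (Xc * Pt (Suc n)) - [:aa (Suc n):] * (Xc * Pt n)"
      by (rule lin_id3)
    finally show ?thesis using XPt by simp
  qed
  have bbeq: "bb (Suc n) = \<beta> (Suc n) \<and> aa (Suc n) = \<alpha> (Suc n)" for n
  proof -
    have eq: "[:-\<beta> (Suc n),1:] * E (Suc n) - smult (\<alpha> (Suc n)) (E n)
        = [:-bb (Suc n),1:] * E (Suc n) - smult (aa (Suc n)) (E n)"
      using Erec Erec2 by metis
    have c0: "coeff (E n) (Suc (Suc n)) = 0" using dE[of n] by (simp add: coeff_eq_0)
    have c1: "coeff (E (Suc n)) (Suc (Suc n)) = 1" using dE[of "Suc n"] by simp
    from arg_cong[OF eq, of "\<lambda>p. coeff p (Suc (Suc n))"] c0 c1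
    have b1: "bb (Suc n) = \<beta> (Suc n)" by simp
    then have "smult (\<alpha> (Suc n)) (E n) = smult (aa (Suc n)) (E n)" using eq by simp
    from arg_cong[OF this, of "\<lambda>p. coeff p (Suc n)"] dE[of n]
    have "aa (Suc n) = \<alpha> (Suc n)" by simp
    with b1 show ?thesis by simp
  qed

  define P1 where "P1 = assoc1 b a"
  define Q where "Q = assoc1 bb aa"
  define D' where "D' k = (if k = 0 then -1 else Xc * P1 (k - 1) - P k)" for k
  have P1rec: "P1 (Suc (Suc k)) = [:- b (Suc (Suc k)), 1:] * P1 (Suc k) - smult (a (Suc (Suc k))) (P1 k)" for k
    by (simp add: P1_def assoc1_def)
  have Qrec: "Q (Suc (Suc k)) = [:- bb (Suc (Suc k)), 1:] * Q (Suc k) - smult (aa (Suc (Suc k))) (Q k)" for k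
    by (simp add: Q_def assoc1_def)
  have D'rec: "D' (Suc (Suc n)) = [:-b (Suc n),1:] * D' (Suc n) - smult (a (Suc n)) (D' n)" for n
  proof (cases n)
    case 0
    have "D' 2 = Xc * [:-b 1, 1:] - ([:- b 1, 1:] * [:-b 0, 1:] - [:a 1:])"
      using Prec[of 0] P0 P1 by (simp add: D'_def P1_def assoc1_def numeral_2_eq_2)
    moreover have "D' 1 = Xc - [:-b 0, 1:]" using P1 by (simp add: D'_def P1_def assoc1_def)
    ultimately show ?thesis using 0 by (simp add: D'_def Xc_def numeral_2_eq_2 algebra_simps)
  next
    case (Suc m)
    have "D' (Suc (Suc n)) = Xc * ([:- b (Suc (Suc m)), 1:] * P1 (Suc m) - [:a (Suc (Suc m)):] * P1 m)
        - ([:- b (Suc (Suc m)), 1:] * P (Suc (Suc m)) - [:a (Suc (Suc m)):] * P (Suc m))"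
      using Suc P1rec[of m] Prec[of "Suc m"] by (simp add: D'_def)
    also have "\<dots> = [:- b (Suc (Suc m)), 1:] * (Xc * P1 (Suc m) - P (Suc (Suc m)))
        - [:a (Suc (Suc m)):] * (Xc * P1 m - P (Suc m))"
      by (rule lin_id1)
    finally show ?thesis using Suc by (simp add: D'_def)
  qed
  define G where "G k = D' (Suc k) - smult (r k) (D' k)" for k
  have Grec: "G (Suc (Suc n)) = [:-bb (Suc n),1:] * G (Suc n) - smult (aa (Suc n)) (G n)" for n
  proof -
    have "G (Suc (Suc n)) = [:-\<beta> (Suc n),1:] * G (Suc n) - smult (\<alpha> (Suc n)) (G n)"
      unfolding G_def \<beta>_def \<alpha>_def
    proof (rule christ_alg)
      show "D' (Suc (Suc (Suc n))) = [:- b (Suc (Suc n)), 1:] * D' (Suc (Suc n)) - smult (a (Suc (Suc n))) (D' (Suc n))"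
        by (rule D'rec)
      show "D' (Suc (Suc n)) = [:- b (Suc n), 1:] * D' (Suc n) - smult (a (Suc n)) (D' n)"
        by (rule D'rec)
      show "a (Suc (Suc n)) = (c - b (Suc (Suc n))) * r (Suc n) - r (Suc (Suc n)) * r (Suc n)"
        using r_rec[of "Suc n"] by simp
      show "a (Suc n) = (c - b (Suc n)) * r n - r (Suc n) * r n"
        using r_rec[of n] by simp
    qed
    then show ?thesis using bbeq[of n] by simp
  qed
  have D'0: "D' 0 = -1" by (simp add: D'_def)
  have D'1: "D' 1 = [:b 0 - c:]" using P1 by (simp add: D'_def P1_def assoc1_def Xc_def)
  have G0: "G 0 = 0" using D'0 D'1 r0 by (simp add: G_def)
  have a1: "a (Suc 0) = (c - b 0) * (c - b (Suc 0) - r (Suc 0))" using r_rec[of 0] r0 by (simp add: algebra_simps)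
  have G1: "G 1 = smult (b 0 - c) (Xc * Q 0)"
  proof -
    have "D' 2 = [:-b 1,1:] * [:b 0 - c:] + [:a 1:]"
      using D'rec[of 0] D'0 D'1 by (simp add: numeral_2_eq_2)
    then have "G 1 = [:-b 1,1:] * [:b 0 - c:] + [:a 1:] - smult (r 1) [:b 0 - c:]"
      using D'1 by (simp add: G_def numeral_2_eq_2)
    also have "\<dots> = smult (b 0 - c) (Xc * Q 0)"
      by (simp add: Q_def assoc1_def Xc_def a1 algebra_simps)
    finally show ?thesis .
  qed
  have GQ: "G (Suc n) = smult (b 0 - c) (Xc * Q n) \<and> G (Suc (Suc n)) = smult (b 0 - c) (Xc * Q (Suc n))" for n
  proof (induction n)
    case 0
    have G2: "G 2 = [:-bb 1,1:] * G 1" using Grec[of 0] G0 by (simp add: numeral_2_eq_2)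
    have Q1: "Q 1 = [:-bb 1, 1:] * Q 0" by (simp add: Q_def assoc1_def)
    have "G 2 = [:-bb 1,1:] * smult (b 0 - c) (Xc * Q 0)" by (simp only: G2 G1)
    also have "\<dots> = smult (b 0 - c) (Xc * Q 1)"
      unfolding Q1 by (metis mult.left_commute mult_smult_right)
    finally show ?case using G1 by (simp add: numeral_2_eq_2)
  next
    case (Suc n)
    have "G (Suc (Suc (Suc n))) = [:-bb (Suc (Suc n)),1:] * ([:b 0 - c:] * (Xc * Q (Suc n)))
          - [:aa (Suc (Suc n)):] * ([:b 0 - c:] * (Xc * Q n))"
      using Grec[of "Suc n"] Suc.IH by (simp add: mult.commute)
    also have "\<dots> = [:b 0 - c:] * (Xc * ([:-bb (Suc (Suc n)),1:] * Q (Suc n) - [:aa (Suc (Suc n)):] * Q n))"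
      by (rule lin_id2[symmetric])
    finally show ?case using Suc.IH Qrec[of n] by simp
  qed
  have dR: "degree (R n) = n \<and> lead_coeff (R n) = 1" for n using SR unfolding is_SMOP_def by blast
  have RD: "R n = smult \<kappa> (D' (Suc n))" for n using Rdef by (simp add: \<kappa>_def D'_def P1_def Xc_def)
  have kap: "\<kappa> * (b 0 - c) = 1"
  proof -
    have "R 0 = [:\<kappa> * (b 0 - c):]" using RD[of 0] D'1 by simp
    then show ?thesis using dR[of 0] by simp
  qed
  have R0: "R 0 = 1"
  proof -
    have "R 0 = [:coeff (R 0) 0:]" using dR[of 0] by (metis degree_0_id)
    moreover have "coeff (R 0) 0 = 1" using dR[of 0] by (metis)
    ultimately show ?thesis by (simp add: one_pCons)
  qed
  have XQ: "Xc * Q n = R (Suc n) - smult (r (Suc n)) (R n)" for n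
  proof -
    have "R (Suc n) - smult (r (Suc n)) (R n) = smult \<kappa> (G (Suc n))"
      by (simp add: RD G_def smult_diff_right ac_simps)
    also have "\<dots> = Xc * Q n" using GQ[of n] kap by simp
    finally show ?thesis by simp
  qed
  have vR: "fapp v (R k) = 0" if "k \<noteq> 0" for k
    using SR that R0 unfolding is_SMOP_def by (metis mult.right_neutral)
  have vR0: "fapp v (R 0) \<noteq> 0" using SR R0 unfolding is_SMOP_def by (metis mult.right_neutral)
  have fQ: "fapp (mult_xc c v) (Q n) = fapp v (R (Suc n)) - r (Suc n) * fapp v (R n)" for n
    unfolding fapp_mult_xc Xc_def[symmetric] XQ by (simp add: fapp_diff fapp_smult)
  have "is_SMOP (mult_xc c v) (ttr (\<lambda>n. bb (Suc n)) (\<lambda>n. aa (Suc n)))"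
  proof (rule favard)
    show "\<forall>n. aa (Suc n) \<noteq> 0" using aanz by simp
    show "\<forall>n\<ge>1. fapp (mult_xc c v) (ttr (\<lambda>n. bb (Suc n)) (\<lambda>n. aa (Suc n)) n) = 0"
      using fQ vR unfolding Q_def assoc1_def by auto
    have "fapp (mult_xc c v) (Q 0) \<noteq> 0" using fQ[of 0] vR[of 1] vR0 rnz[of 1] by simp
    then show "mult_xc c v 0 \<noteq> 0" by (simp add: Q_def assoc1_def fapp_one)
  qed
  then show ?thesis by (simp add: assoc1_def)
qed

end
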